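(* Let $Z$ be a countable well-partially-ordered set and let $n\in\mathbb{N}$. For every $z\in Z$, $\mathrm{rk}(z)<\omega\cdot n$ if and only if $z\in A_n(Z)$.
   Context: A well partial order (wpo) is a partial order in which every infinite sequence $x_0,x_1,\dots$ has $i<j$ with $x_i\le x_j$. The rank of $z$ in a well-founded poset $Z$ is $\mathrm{rk}(z)=\sup\{\mathrm{rk}(y)+1: y<z\}$ ($\sup\emptyset=0$). An acceleration candidate is a strictly increasing sequence $z_0<z_1<\cdots$; it goes through a set $A$ if some $z_i\in A$, and is below $z$ if $z_i\le z$ for all $i$. Define $A_0(Z)=\emptyset$ and, for an ordinal $\alpha>0$, $A_\alpha(Z)$ as the set of $z\in Z$ such that every acceleration candidate below $z$ goes through $A_\beta(Z)$ for some $\beta<\alpha$. *)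

theory Defs
  imports "HOL-Library.Countable_Set"
begin

text \<open>A poset is modelled as a subset Z of a type with a partial order
 (class order); the order on Z is the induced one.\<close>

definition wpo :: "'a::order set \<Rightarrow> bool" where
  "wpo Z \<longleftrightarrow> (\<forall>x::nat \<Rightarrow> 'a. (\<forall>i. x i \<in> Z) \<longrightarrow> (\<exists>i j. i < j \<and> x i \<le> x j))"

definition acc_candidate :: "'a::order set \<Rightarrow> (nat \<Rightarrow> 'a) \<Rightarrow> bool" where
  "acc_candidate Z f \<longleftrightarrow> (\<forall>i. f i \<in> Z \<and> f i < f (Suc i))"

definition below :: "(nat \<Rightarrow> 'a::order) \<Rightarrow> 'a \<Rightarrow> bool" where
  "below f z \<longleftrightarrow> (\<forall>i. f i \<le> z)"

definition goes_through :: "(nat \<Rightarrow> 'a) \<Rightarrow> 'a set \<Rightarrow> bool" where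
  "goes_through f A \<longleftrightarrow> (\<exists>i. f i \<in> A)"

text \<open>accAU Z k = (A_k(Z), union of A_j(Z) for j < k).  Since "goes through
 A_beta for some beta < alpha" is the same as "goes through the union of the
 A_beta, beta < alpha", this is a literal transcription of the definition
 for finite ordinals.\<close>
primrec accAU :: "'a::order set \<Rightarrow> nat \<Rightarrow> 'a set \<times> 'a set" where
  "accAU Z 0 = ({}, {})"
| "accAU Z (Suc k) =
     (let U = fst (accAU Z k) \<union> snd (accAU Z k)
      in ({z \<in> Z. \<forall>f. acc_candidate Z f \<and> below f z \<longrightarrow> goes_through f U}, U))"

definition A :: "'a::order set \<Rightarrow> nat \<Rightarrow> 'a set" where
  "A Z n = fst (accAU Z n)"

text \<open>rank_less Z k m = {z \<in> Z. rk z < omega*k + m}, by the standard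
 recursion on the ordinal bound alpha = omega*k+m for the set of elements of
 rank < alpha:  W_0 = {}, W_(alpha+1) = {z. all y < z have y \<in> W_alpha},
 W_lambda = union of W_beta, beta < lambda (here lambda = omega*(k+1) is the
 supremum of omega*k+m, m < omega).\<close>
fun rank_less :: "'a::order set \<Rightarrow> nat \<Rightarrow> nat \<Rightarrow> 'a set" where
  "rank_less Z 0 0 = {}"
| "rank_less Z (Suc k) 0 = (\<Union>m. rank_less Z k m)"
| "rank_less Z k (Suc m) = {z \<in> Z. \<forall>y \<in> Z. y < z \<longrightarrow> y \<in> rank_less Z k m}"

definition rank_less_omega_mult :: "'a::order set \<Rightarrow> 'a \<Rightarrow> nat \<Rightarrow> bool" where
  "rank_less_omega_mult Z z n \<longleftrightarrow> z \<in> rank_less Z n 0"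

end

theory Submission
  imports Defs
begin

lemma rl_sub: "rank_less Z k m \<subseteq> Z"
  by (induction Z k m rule: rank_less.induct) auto

lemma L0: "z \<in> rank_less Z k 0 \<Longrightarrow> y \<in> Z \<Longrightarrow> y < z \<Longrightarrow> y \<in> rank_less Z k 0"
proof (induction k arbitrary: z y)
  case 0
  then show ?case by simp
next
  case (Suc k)
  then obtain j where j: "z \<in> rank_less Z k j" by auto
  show ?case
  proof (cases j)
    case 0
    with Suc j show ?thesis by auto
  next
    case (Suc j')
    with j Suc.prems have "y \<in> rank_less Z k j'" by auto
    then show ?thesis by auto
  qed
qed

lemma M1: "rank_less Z k m \<subseteq> rank_less Z k (Suc m)"
proof (induction m)
  case 0
  show ?case using L0[of _ Z k] rl_sub[of Z k 0] by auto
next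
  case (Suc m)
  then show ?case by auto
qed

lemma Mono: "m \<le> m' \<Longrightarrow> rank_less Z k m \<subseteq> rank_less Z k m'"
proof (induction rule: dec_induct)
  case base
  then show ?case by simp
next
  case (step n)
  then show ?case using M1[of Z k n] by blast
qed

lemma D: "z \<in> rank_less Z k m \<Longrightarrow> y \<in> Z \<Longrightarrow> y \<le> z \<Longrightarrow> y \<in> rank_less Z k m"
proof (cases "y = z")
  case False
  assume a: "z \<in> rank_less Z k m" "y \<in> Z" "y \<le> z"
  then have lt: "y < z" using False by auto
  show ?thesis
  proof (cases m)
    case 0
    then show ?thesis using L0 a lt by blast
  next
    case (Suc m')
    with a lt have "y \<in> rank_less Z k m'" by auto
    then show ?thesis using M1 Suc by blast
  qed
qed simp

lemma wpo_min:
  assumes "wpo Z" "W \<subseteq> Z" "w \<in> W"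
  shows "\<exists>m\<in>W. \<forall>y\<in>W. \<not> y < m"
proof (rule ccontr)
  assume "\<not> ?thesis"
  then have h: "\<forall>x\<in>W. \<exists>y\<in>W. y < x" by auto
  define nx where "nx x = (SOME y. y \<in> W \<and> y < x)" for x
  have nx: "x \<in> W \<Longrightarrow> nx x \<in> W \<and> nx x < x" for x
    using h someI_ex[of "\<lambda>y. y \<in> W \<and> y < x"] unfolding nx_def by blast
  define s where "s n = (nx ^^ n) w" for n
  have sW: "s n \<in> W" for n by (induction n) (auto simp: s_def nx assms)
  have ss: "s (Suc n) < s n" for n using nx sW by (simp add: s_def)
  have lt: "i < j \<Longrightarrow> s j < s i" for i j
  proof (induction j)
    case 0 then show ?case by simp
  next
    case (Suc j)
    then show ?case using ss less_trans less_Suc_eq by metis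
  qed
  obtain i j where "i < j" "s i \<le> s j"
    using assms(1) sW assms(2) unfolding wpo_def by blast
  then show False using lt[of i j] by auto
qed

lemma wpo_rich:
  assumes "wpo Z" "X \<subseteq> Z" "\<forall>m. \<exists>w\<in>X. P m w" "\<forall>m w. P (Suc m) w \<longrightarrow> P m w"
  shows "\<exists>y\<in>X. \<forall>m. \<exists>w\<in>X. y \<le> w \<and> P m w"
proof (rule ccontr)
  assume "\<not> ?thesis"
  then have h: "\<forall>y\<in>X. \<exists>m. \<forall>w\<in>X. y \<le> w \<longrightarrow> \<not> P m w" by auto
  define b where "b y = (SOME m. \<forall>w\<in>X. y \<le> w \<longrightarrow> \<not> P m w)" for y
  have b: "y \<in> X \<Longrightarrow> w \<in> X \<Longrightarrow> y \<le> w \<Longrightarrow> \<not> P (b y) w" for y w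
    using h someI_ex[of "\<lambda>m. \<forall>w\<in>X. y \<le> w \<longrightarrow> \<not> P m w"] unfolding b_def by blast
  define pick where "pick a = (SOME w. w \<in> X \<and> P a w)" for a
  have pick: "pick a \<in> X \<and> P a (pick a)" for a
    using assms(3) someI_ex[of "\<lambda>w. w \<in> X \<and> P a w"] unfolding pick_def by blast
  have anti: "P (m + d) w \<Longrightarrow> P m w" for m d w
    by (induction d) (use assms(4) in auto)
  have anti2: "m \<le> m' \<Longrightarrow> P m' w \<Longrightarrow> P m w" for m m' w
    using anti[of m "m' - m" w] by simp
  define G where "G a = a + b (pick a)" for a
  define acc where "acc n = (G ^^ n) 0" for n
  define x where "x n = pick (acc n)" for n
  have accS: "acc (Suc n) = acc n + b (x n)" for n by (simp add: acc_def x_def G_def)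
  have accm: "i \<le> j \<Longrightarrow> acc i \<le> acc j" for i j
    using lift_Suc_mono_le[of acc] accS by auto
  have nle: "i < j \<Longrightarrow> \<not> x i \<le> x j" for i j
  proof
    assume ij: "i < j" and le: "x i \<le> x j"
    have "b (x i) \<le> acc j" using accm[of "Suc i" j] ij accS[of i] by simp
    moreover have "P (acc j) (x j)" using pick x_def by simp
    ultimately have "P (b (x i)) (x j)" using anti2 by blast
    then show False using b[of "x i" "x j"] pick x_def le by simp
  qed
  have "\<forall>i. x i \<in> Z" using pick x_def assms(2) by auto
  then show False using assms(1) nle unfolding wpo_def by blast
qed

lemma key:
  assumes wpo: "wpo Z" and zZ: "z \<in> Z"
  shows "z \<in> rank_less Z (Suc k) 0 \<longleftrightarrow>
    (\<forall>f. acc_candidate Z f \<and> below f z \<longrightarrow> goes_through f (rank_less Z k 0))"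
proof
  assume "z \<in> rank_less Z (Suc k) 0"
  then obtain m where zm: "z \<in> rank_less Z k m" by auto
  show "\<forall>f. acc_candidate Z f \<and> below f z \<longrightarrow> goes_through f (rank_less Z k 0)"
  proof (intro allI impI)
    fix f assume fa: "acc_candidate Z f \<and> below f z"
    show "goes_through f (rank_less Z k 0)"
    proof (rule ccontr)
      assume "\<not> ?thesis"
      then have n0: "\<forall>i. f i \<notin> rank_less Z k 0" unfolding goes_through_def by auto
      have "f i \<notin> rank_less Z k i" for i
      proof (induction i)
        case 0 then show ?case using n0 by simp
      next
        case (Suc i)
        then show ?case using fa unfolding acc_candidate_def by auto
      qed
      moreover have "f m \<in> rank_less Z k m"
        using D[OF zm] fa unfolding acc_candidate_def below_def by auto
      ultimately show False by blast
    qed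
  qed
next
  assume H: "\<forall>f. acc_candidate Z f \<and> below f z \<longrightarrow> goes_through f (rank_less Z k 0)"
  show "z \<in> rank_less Z (Suc k) 0"
  proof (rule ccontr)
    assume "z \<notin> rank_less Z (Suc k) 0"
    then have zn: "\<forall>m. z \<notin> rank_less Z k m" by auto
    define S where "S = {w \<in> Z. w \<le> z \<and> w \<in> rank_less Z (Suc k) 0 \<and> w \<notin> rank_less Z k 0}"
    define rich where "rich y \<longleftrightarrow> y \<in> S \<and> (\<forall>m. \<exists>w\<in>S. y \<le> w \<and> w \<notin> rank_less Z k m)" for y
    have base: "\<forall>m. \<exists>w\<in>S. w \<notin> rank_less Z k m"
    proof
      fix m
      obtain w where w: "w \<in> {w \<in> Z. w \<le> z \<and> w \<notin> rank_less Z k m}"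
        and wm: "\<forall>y\<in>{w \<in> Z. w \<le> z \<and> w \<notin> rank_less Z k m}. \<not> y < w"
        using wpo_min[OF wpo, of "{w \<in> Z. w \<le> z \<and> w \<notin> rank_less Z k m}" z] zZ zn by auto
      have "w \<in> rank_less Z k (Suc m)"
        using w wm by (auto dest: order.strict_trans1)
      then have "w \<in> rank_less Z (Suc k) 0" by (simp del: rank_less.simps(3)) blast
      moreover have "w \<notin> rank_less Z k 0" using w Mono[of 0 m Z k] by auto
      ultimately show "\<exists>w\<in>S. w \<notin> rank_less Z k m" using w S_def by auto
    qed
    have anti: "\<forall>m w. w \<notin> rank_less Z k (Suc m) \<longrightarrow> w \<notin> rank_less Z k m"
      using M1 by blast
    have "\<exists>y\<in>S. \<forall>m. \<exists>w\<in>S. y \<le> w \<and> w \<notin> rank_less Z k m"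
      by (rule wpo_rich[OF wpo _ base anti]) (auto simp: S_def)
    then obtain y0 where y0: "rich y0" unfolding rich_def by blast
    have step: "rich y \<Longrightarrow> \<exists>y'. y < y' \<and> rich y'" for y
    proof -
      assume ry: "rich y"
      then have "y \<in> rank_less Z (Suc k) 0" unfolding rich_def S_def by auto
      then obtain m0 where m0: "y \<in> rank_less Z k m0" by auto
      have "\<forall>m. \<exists>w\<in>{w\<in>S. y < w}. w \<notin> rank_less Z k m"
      proof
        fix m
        obtain w where w: "w \<in> S" "y \<le> w" "w \<notin> rank_less Z k (max m m0)"
          using ry unfolding rich_def by blast
        have "w \<noteq> y" using w(3) m0 Mono[of m0 "max m m0" Z k] by auto
        moreover have "w \<notin> rank_less Z k m" using w(3) Mono[of m "max m m0" Z k] by auto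
        ultimately show "\<exists>w\<in>{w\<in>S. y < w}. w \<notin> rank_less Z k m" using w by auto
      qed
      then have "\<exists>y'\<in>{w\<in>S. y < w}. \<forall>m. \<exists>w\<in>{w\<in>S. y < w}. y' \<le> w \<and> w \<notin> rank_less Z k m"
        by (intro wpo_rich[OF wpo _ _ anti]) (auto simp: S_def)
      then show ?thesis unfolding rich_def by blast
    qed
    define nx where "nx y = (SOME y'. y < y' \<and> rich y')" for y
    have nx: "rich y \<Longrightarrow> y < nx y \<and> rich (nx y)" for y
      using step someI_ex[of "\<lambda>y'. y < y' \<and> rich y'"] unfolding nx_def by blast
    define f where "f n = (nx ^^ n) y0" for n
    have fr: "rich (f n)" for n by (induction n) (auto simp: f_def y0 nx)
    have fs: "f n < f (Suc n)" for n using fr nx by (simp add: f_def)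
    have "acc_candidate Z f" using fr fs unfolding acc_candidate_def rich_def S_def by auto
    moreover have "below f z" using fr unfolding below_def rich_def S_def by auto
    moreover have "\<not> goes_through f (rank_less Z k 0)"
      using fr unfolding goes_through_def rich_def S_def by auto
    ultimately show False using H by blast
  qed
qed

lemma AU:
  assumes "wpo Z"
  shows "fst (accAU Z k) = rank_less Z k 0 \<and> snd (accAU Z k) \<subseteq> rank_less Z k 0"
proof (induction k)
  case 0
  then show ?case by simp
next
  case (Suc k)
  then have U: "fst (accAU Z k) \<union> snd (accAU Z k) = rank_less Z k 0" by auto
  have "fst (accAU Z (Suc k)) = rank_less Z (Suc k) 0"
    using key[OF assms] rl_sub[of Z "Suc k" 0] by (auto simp: Let_def U simp del: rank_less.simps)
  moreover have "snd (accAU Z (Suc k)) \<subseteq> rank_less Z (Suc k) 0"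
    by (auto simp: Let_def U)
  ultimately show ?case by blast
qed

theorem lemma15:
  fixes Z :: "'a::order set" and n :: nat
  assumes "countable Z" and "wpo Z" and "z \<in> Z"
  shows "rank_less_omega_mult Z z n \<longleftrightarrow> z \<in> A Z n"
  using AU[OF assms(2), of n] unfolding rank_less_omega_mult_def A_def by simp

end
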